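(* Let $\sigma>0$, $\alpha>0$, $\eta>0$ and define the penalty $p(t)=(\alpha+1)\log(\sigma\eta+t)$ for $t\ge 0$. For $\hat\beta\in\mathbb{R}$ consider the penalized least squares problem $$\tilde\beta(\hat\beta)=\arg\min_{\beta\in\mathbb{R}}\left\{\tfrac12(\hat\beta-\beta)^2+\sigma^{2}p(|\beta|)\right\}.$$ If $\eta<2\sqrt{\alpha+1}$, then the resulting estimator is a thresholding rule: there exists $c>0$ such that for every $\hat\beta$ with $|\hat\beta|<c$ the minimizer is $\tilde\beta(\hat\beta)=0$.
   Context: This penalty is the part of $-\log\pi(\beta\mid\sigma)$ depending on $\beta$ under the generalized double Pareto prior $\beta\mid\sigma\sim\mathrm{GDP}(\xi=\sigma\eta/\alpha,\alpha)$, whose density is $\frac{1}{2\xi}(1+|\beta|/(\alpha\xi))^{-(\alpha+1)}$; the problem corresponds to a single coordinate of penalized least squares with an orthonormal design, where $\hat\beta=\mathbf{x}_j'\mathbf{y}$. *)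

theory Defs
  imports Complex_Main
begin

definition gdp_pen :: "real \<Rightarrow> real \<Rightarrow> real \<Rightarrow> real \<Rightarrow> real" where
  "gdp_pen \<sigma> \<alpha> \<eta> t = (\<alpha> + 1) * ln (\<sigma> * \<eta> + t)"

definition gdp_obj :: "real \<Rightarrow> real \<Rightarrow> real \<Rightarrow> real \<Rightarrow> real \<Rightarrow> real" where
  "gdp_obj \<sigma> \<alpha> \<eta> bhat \<beta> = (1/2) * (bhat - \<beta>)^2 + \<sigma>^2 * gdp_pen \<sigma> \<alpha> \<eta> \<bar>\<beta>\<bar>"

definition gdp_argmin :: "real \<Rightarrow> real \<Rightarrow> real \<Rightarrow> real \<Rightarrow> real set" where
  "gdp_argmin \<sigma> \<alpha> \<eta> bhat =
     {\<beta>. \<forall>\<gamma>. gdp_obj \<sigma> \<alpha> \<eta> bhat \<beta> \<le> gdp_obj \<sigma> \<alpha> \<eta> bhat \<gamma>}"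

end

theory Submission
  imports Defs
begin

lemma key:
  fixes k A t b :: real
  assumes k: "k > 0" and A: "A > 0" and t: "t > 0"
    and b: "\<bar>b\<bar> < min (k/2) (A/(2*k))"
  shows "(1/2)*t^2 - \<bar>b\<bar>*t + A*(ln (k+t) - ln k) > 0"
proof -
  have "ln (k/(k+t)) \<le> k/(k+t) - 1" using k t by (intro ln_le_minus_one) auto
  moreover have "ln (k/(k+t)) = ln k - ln (k+t)" using k t by (simp add: ln_div)
  moreover have "k/(k+t) - 1 = - (t/(k+t))" using k t by (simp add: field_simps)
  ultimately have L: "ln (k+t) - ln k \<ge> t/(k+t)" by linarith
  have M: "t/2 + A/(k+t) > \<bar>b\<bar>"
  proof (cases "t \<le> k")
    case True
    have "A/(2*k) \<le> A/(k+t)" using True k t A by (intro divide_left_mono) auto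
    moreover have "t/2 > 0" using t by simp
    ultimately show ?thesis using b by linarith
  next
    case False
    have "A/(k+t) > 0" using A k t by simp
    then show ?thesis using b False by linarith
  qed
  have "A*(ln (k+t) - ln k) \<ge> A*(t/(k+t))" using L A by (intro mult_left_mono) auto
  moreover have "t*(t/2 + A/(k+t)) > t*\<bar>b\<bar>" using M t by simp
  moreover have "t*(t/2 + A/(k+t)) = (1/2)*t^2 + A*(t/(k+t))"
    using k t by (simp add: field_simps power2_eq_square)
  ultimately show ?thesis by (simp add: algebra_simps)
qed

theorem proposition3:
  fixes \<sigma> \<alpha> \<eta> :: real
  assumes "\<sigma> > 0" and "\<alpha> > 0" and "\<eta> > 0"
    and "\<eta> < 2 * sqrt (\<alpha> + 1)"
  shows "\<exists>c>0. \<forall>bhat::real. \<bar>bhat\<bar> < c \<longrightarrow> gdp_argmin \<sigma> \<alpha> \<eta> bhat = {0}"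
proof -
  define k where "k = \<sigma>*\<eta>"
  define A where "A = \<sigma>^2*(\<alpha>+1)"
  have k: "k > 0" using assms by (simp add: k_def)
  have A: "A > 0" using assms by (simp add: A_def)
  have strict: "gdp_obj \<sigma> \<alpha> \<eta> b 0 < gdp_obj \<sigma> \<alpha> \<eta> b \<beta>"
    if b: "\<bar>b\<bar> < min (k/2) (A/(2*k))" and nz: "\<beta> \<noteq> 0" for b \<beta>
  proof -
    have t: "\<bar>\<beta>\<bar> > 0" using nz by simp
    have K: "(1/2)*\<bar>\<beta>\<bar>^2 - \<bar>b\<bar>*\<bar>\<beta>\<bar> + A*(ln (k+\<bar>\<beta>\<bar>) - ln k) > 0"
      using key[OF k A t b] .
    have "b*\<beta> \<le> \<bar>b\<bar>*\<bar>\<beta>\<bar>" by (metis abs_ge_self abs_mult)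
    moreover have "\<bar>\<beta>\<bar>^2 = \<beta>^2" by simp
    moreover have "gdp_obj \<sigma> \<alpha> \<eta> b \<beta> - gdp_obj \<sigma> \<alpha> \<eta> b 0
        = (1/2)*\<beta>^2 - b*\<beta> + A*(ln (k+\<bar>\<beta>\<bar>) - ln k)"
      unfolding gdp_obj_def gdp_pen_def A_def k_def by (simp add: algebra_simps power2_eq_square)
    ultimately show ?thesis using K by linarith
  qed
  show ?thesis
  proof (intro exI[of _ "min (k/2) (A/(2*k))"] conjI allI impI)
    show "min (k/2) (A/(2*k)) > 0" using k A by simp
  next
    fix b :: real assume b: "\<bar>b\<bar> < min (k/2) (A/(2*k))"
    show "gdp_argmin \<sigma> \<alpha> \<eta> b = {0}"
    proof
      show "{0} \<subseteq> gdp_argmin \<sigma> \<alpha> \<eta> b"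
        unfolding gdp_argmin_def using strict[OF b] by (auto intro: less_imp_le)
        (metis order.order_iff_strict)
    next
      show "gdp_argmin \<sigma> \<alpha> \<eta> b \<subseteq> {0}"
      proof
        fix x assume "x \<in> gdp_argmin \<sigma> \<alpha> \<eta> b"
        then have "gdp_obj \<sigma> \<alpha> \<eta> b x \<le> gdp_obj \<sigma> \<alpha> \<eta> b 0"
          unfolding gdp_argmin_def by blast
        then show "x \<in> {0}" using strict[OF b, of x] by (cases "x = 0") auto
      qed
    qed
  qed
qed

end
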